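(* Let $L,J\ge0$ be integers and let $Q_{\ell,j}(x)$, $0\le\ell\le L$, $0\le j\le J$, be polynomials with nonnegative coefficients. With the allowed weighted paths defined from these polynomials as in the context, set, for $k\ge0$, \[ F_{k,0}(x)=\sum_{n\ge0}\ \sum_{p\in\mathcal P_{n,k}}w(p)\,x^n,\qquad F(x,u)=\sum_{k\ge0}F_{k,0}(x)u^k , \] where $\mathcal P_{n,k}$ is the multiset of allowed paths from $(0,k)$ to $(n,0)$. Then $F(x,u)$ satisfies \[ F(x,u)=1+x\sum_{\ell=0}^L\sum_{j=0}^J Q_{\ell,j}(x)\,u^j\,\Delta^\ell F(x,u), \] and it is the unique formal power series solution of this equation.
   Context: For $G(x,u)=\sum_{k\ge0}G_k(x)u^k$ and $\ell\ge1$, $\Delta^\ell G(x,u)=\sum_{k\ge0}G_{k+\ell}(x)u^k$, and $\Delta^0G=G$. Step model: for each level $h\ge0$, the multiset $\mathcal S_h$ of steps allowed at level $h$ contains, for every triple $(\ell,j,r)$ with $0\le\ell\le L$, $0\le j\le\min(h,J)$, $r\ge0$ and $[x^r]Q_{\ell,j}(x)\ne0$, one (labelled) step with displacement $(1+r,\ell-j)$ and weight $w=[x^r]Q_{\ell,j}(x)$; distinct triples give distinct elements of the multiset even if their displacements coincide. An allowed path starting at level $k$ is a finite sequence $s_1\cdots s_M$ ($M\ge0$) of labelled steps, visiting the points $(0,k),(0,k)+s_1,(0,k)+s_1+s_2,\dots$, such that each step $s_m$ belongs to $\mathcal S_h$ where $h$ is the second coordinate (level) of the point at which $s_m$ starts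 (levels then automatically stay $\ge0$). Its weight is $w(p)=\prod_{m=1}^M w(s_m)$, the empty path having weight $1$. *)

theory Defs
  imports "HOL-Computational_Algebra.Computational_Algebra"
begin

text \<open>A labelled step is a triple (l, j, r): displacement (1 + r, l - j),
  weight coeff (Q l j) r.  A path is a list of labelled steps.\<close>

type_synonym step = "nat \<times> nat \<times> nat"

fun path_ok :: "nat \<Rightarrow> nat \<Rightarrow> (nat \<Rightarrow> nat \<Rightarrow> real poly) \<Rightarrow> nat \<Rightarrow> step list \<Rightarrow> bool" where
  "path_ok L J Q h [] = True"
| "path_ok L J Q h ((l, j, r) # s) =
     (l \<le> L \<and> j \<le> min h J \<and> coeff (Q l j) r \<noteq> 0 \<and> path_ok L J Q (h + l - j) s)"

fun final_level :: "nat \<Rightarrow> step list \<Rightarrow> nat" where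
  "final_level h [] = h"
| "final_level h ((l, j, r) # s) = final_level (h + l - j) s"

definition path_len :: "step list \<Rightarrow> nat" where
  "path_len s = sum_list (map (\<lambda>(l, j, r). 1 + r) s)"

definition path_weight :: "(nat \<Rightarrow> nat \<Rightarrow> real poly) \<Rightarrow> step list \<Rightarrow> real" where
  "path_weight Q s = prod_list (map (\<lambda>(l, j, r). coeff (Q l j) r) s)"

definition paths :: "nat \<Rightarrow> nat \<Rightarrow> (nat \<Rightarrow> nat \<Rightarrow> real poly) \<Rightarrow> nat \<Rightarrow> nat \<Rightarrow> step list set" where
  "paths L J Q n k = {s. path_ok L J Q k s \<and> path_len s = n \<and> final_level k s = 0}"

text \<open>Bivariate series F(x,u) as a power series in u whose coefficients are
  power series in x: the u^k coefficient is F_{k,0}(x).\<close>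
definition Fser :: "nat \<Rightarrow> nat \<Rightarrow> (nat \<Rightarrow> nat \<Rightarrow> real poly) \<Rightarrow> real fps fps" where
  "Fser L J Q = Abs_fps (\<lambda>k. Abs_fps (\<lambda>n. \<Sum>p\<in>paths L J Q n k. path_weight Q p))"

definition Delta :: "nat \<Rightarrow> 'a::zero fps \<Rightarrow> 'a fps" where
  "Delta l G = Abs_fps (\<lambda>k. G $ (k + l))"

text \<open>The functional equation, with x = fps_const fps_X and u = fps_X.\<close>
definition rhs :: "nat \<Rightarrow> nat \<Rightarrow> (nat \<Rightarrow> nat \<Rightarrow> real poly) \<Rightarrow> real fps fps \<Rightarrow> real fps fps" where
  "rhs L J Q G = 1 + fps_const fps_X *
     (\<Sum>l\<le>L. \<Sum>j\<le>J. fps_const (fps_of_poly (Q l j)) * fps_X ^ j * Delta l G)"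

end

theory Submission
  imports Defs
begin


lemma path_len_Nil[simp]: "path_len [] = 0" by (simp add: path_len_def)
lemma path_len_Cons[simp]: "path_len ((l,j,r)#s) = 1 + r + path_len s" by (simp add: path_len_def)
lemma path_weight_Nil[simp]: "path_weight Q [] = 1" by (simp add: path_weight_def)
lemma path_weight_Cons[simp]: "path_weight Q ((l,j,r)#s) = coeff (Q l j) r * path_weight Q s"
  by (simp add: path_weight_def)

lemma path_ok_bound:
  "path_ok L J Q h s \<Longrightarrow> set s \<subseteq> {..L} \<times> {..J} \<times> {..path_len s} \<and> length s \<le> path_len s"
proof (induction s arbitrary: h)
  case Nil then show ?case by simp
next
  case (Cons t s)
  obtain l j r where t: "t = (l,j,r)" by (cases t) auto
  from Cons.prems have "path_ok L J Q (h + l - j) s" and "l \<le> L" "j \<le> J" by (auto simp: t)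
  with Cons.IH[of "h + l - j"] show ?case by (fastforce simp: t)
qed

lemma finite_paths: "finite (paths L J Q n k)"
proof -
  have "paths L J Q n k \<subseteq> {xs. set xs \<subseteq> {..L} \<times> {..J} \<times> {..n} \<and> length xs \<le> n}"
    using path_ok_bound unfolding paths_def by fastforce
  moreover have "finite {xs. set xs \<subseteq> {..L} \<times> {..J} \<times> {..n} \<and> length xs \<le> n}"
    by (intro finite_lists_length_le) auto
  ultimately show ?thesis by (rule finite_subset)
qed

lemma paths_0: "paths L J Q 0 k = (if k = 0 then {[]} else {})"
proof -
  have *: "path_len s = 0 \<longleftrightarrow> s = []" for s
    by (cases s) auto
  show ?thesis unfolding paths_def * by auto
qed

definition TT :: "nat \<Rightarrow> nat \<Rightarrow> (nat \<Rightarrow> nat \<Rightarrow> real poly) \<Rightarrow> nat \<Rightarrow> nat \<Rightarrow> step set" where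
  "TT L J Q n k = {(l,j,r). l \<le> L \<and> j \<le> J \<and> j \<le> k \<and> r < n \<and> coeff (Q l j) r \<noteq> 0}"

lemma paths_Suc:
  assumes "n > 0"
  shows "paths L J Q n k = (\<lambda>(t,s). t#s) ` (SIGMA t:TT L J Q n k. (case t of (l,j,r) \<Rightarrow> paths L J Q (n - 1 - r) (k + l - j)))"
proof (intro equalityI subsetI)
  fix s assume s: "s \<in> paths L J Q n k"
  then obtain t s' where ss: "s = t # s'" using assms by (cases s) (auto simp: paths_def)
  obtain l j r where t: "t = (l,j,r)" by (cases t) auto
  from s have "(t, s') \<in> (SIGMA t:TT L J Q n k. (case t of (l,j,r) \<Rightarrow> paths L J Q (n - 1 - r) (k + l - j)))"
    by (auto simp: ss t paths_def TT_def)
  then show "s \<in> (\<lambda>(t,s). t#s) ` (SIGMA t:TT L J Q n k. (case t of (l,j,r) \<Rightarrow> paths L J Q (n - 1 - r) (k + l - j)))"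
    unfolding ss by force
next
  fix s assume "s \<in> (\<lambda>(t,s). t#s) ` (SIGMA t:TT L J Q n k. (case t of (l,j,r) \<Rightarrow> paths L J Q (n - 1 - r) (k + l - j)))"
  then obtain l j r s' where s: "s = (l,j,r) # s'" and "(l,j,r) \<in> TT L J Q n k"
    and "s' \<in> paths L J Q (n - 1 - r) (k + l - j)" by auto
  then show "s \<in> paths L J Q n k" by (auto simp: paths_def TT_def)
qed

definition SS where "SS L J Q n k = (\<Sum>p\<in>paths L J Q n k. path_weight Q p)"

lemma SS_Suc:
  assumes "n > 0"
  shows "SS L J Q n k = (\<Sum>l\<le>L. \<Sum>j\<le>J. if j \<le> k then (\<Sum>r<n. coeff (Q l j) r * SS L J Q (n - 1 - r) (k + l - j)) else 0)"
proof -
  let ?T = "TT L J Q n k"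
  let ?B = "\<lambda>t. (case t of (l,j,r) \<Rightarrow> paths L J Q (n - 1 - r) (k + l - j))"
  have finT: "finite ?T"
    by (rule finite_subset[of _ "{..L} \<times> {..J} \<times> {..<n}"]) (auto simp: TT_def)
  have inj: "inj_on (\<lambda>(t,s). t#s) (SIGMA t:?T. ?B t)" by (auto simp: inj_on_def)
  have "SS L J Q n k = (\<Sum>(t,s)\<in>(SIGMA t:?T. ?B t). path_weight Q (t#s))"
    unfolding SS_def paths_Suc[OF assms] by (subst sum.reindex[OF inj]) (simp add: case_prod_unfold)
  also have "\<dots> = (\<Sum>t\<in>?T. \<Sum>s\<in>?B t. path_weight Q (t#s))"
    by (rule sum.Sigma[symmetric]) (auto simp: finT finite_paths split: prod.splits)
  also have "\<dots> = (\<Sum>t\<in>?T. case t of (l,j,r) \<Rightarrow> coeff (Q l j) r * SS L J Q (n - 1 - r) (k + l - j))"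
    by (intro sum.cong refl) (auto simp: SS_def sum_distrib_left)
  also have "\<dots> = (\<Sum>t\<in>{..L} \<times> {..J} \<times> {..<n}. case t of (l,j,r) \<Rightarrow> if j \<le> k then coeff (Q l j) r * SS L J Q (n - 1 - r) (k + l - j) else 0)"
  proof -
    have "(\<Sum>t\<in>?T. case t of (l,j,r) \<Rightarrow> coeff (Q l j) r * SS L J Q (n - 1 - r) (k + l - j))
        = (\<Sum>t\<in>?T. case t of (l,j,r) \<Rightarrow> if j \<le> k then coeff (Q l j) r * SS L J Q (n - 1 - r) (k + l - j) else 0)"
      by (intro sum.cong refl) (auto simp: TT_def)
    also have "\<dots> = (\<Sum>t\<in>{..L} \<times> {..J} \<times> {..<n}. case t of (l,j,r) \<Rightarrow> if j \<le> k then coeff (Q l j) r * SS L J Q (n - 1 - r) (k + l - j) else 0)"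
      by (intro sum.mono_neutral_left) (auto simp: TT_def split: if_splits)
    finally show ?thesis .
  qed
  also have "\<dots> = (\<Sum>l\<le>L. \<Sum>j\<le>J. \<Sum>r<n. if j \<le> k then coeff (Q l j) r * SS L J Q (n - 1 - r) (k + l - j) else 0)"
    by (simp add: sum.cartesian_product)
  also have "\<dots> = (\<Sum>l\<le>L. \<Sum>j\<le>J. if j \<le> k then (\<Sum>r<n. coeff (Q l j) r * SS L J Q (n - 1 - r) (k + l - j)) else 0)"
    by (intro sum.cong refl) auto
  finally show ?thesis .
qed



definition RR :: "nat \<Rightarrow> nat \<Rightarrow> (nat \<Rightarrow> nat \<Rightarrow> real poly) \<Rightarrow> real fps fps \<Rightarrow> nat \<Rightarrow> nat \<Rightarrow> real" where
 "RR L J Q G k n = (if k = 0 \<and> n = 0 then 1 else 0) + (if n = 0 then 0 else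
    (\<Sum>l\<le>L. \<Sum>j\<le>J. if j \<le> k then (\<Sum>r<n. coeff (Q l j) r * G $ (k + l - j) $ (n - 1 - r)) else 0))"

lemma rhs_nth: "rhs L J Q G $ k $ n = RR L J Q G k n"
proof -
  have A: "(fps_const (fps_of_poly (Q l j)) * fps_X ^ j * Delta l G) $ k $ m =
     (if j \<le> k then (\<Sum>i=0..m. coeff (Q l j) i * G $ (k + l - j) $ (m - i)) else 0)" for l j m
  proof -
    have "(fps_const (fps_of_poly (Q l j)) * fps_X ^ j * Delta l G) $ k =
        fps_of_poly (Q l j) * (if j \<le> k then G $ (k + l - j) else 0)"
      by (simp add: mult.assoc fps_mult_left_const_nth fps_X_power_mult_nth Delta_def not_less)
    then show ?thesis by (simp add: fps_mult_nth)
  qed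
  have B: "(\<Sum>i=0..n-1. f i) = (\<Sum>r<n. f r)" if "n > 0" for f :: "nat \<Rightarrow> real"
    using that by (intro sum.cong) auto
  show ?thesis
  proof (cases n)
    case 0 then show ?thesis unfolding rhs_def RR_def
      by (simp add: fps_mult_left_const_nth fps_X_mult_nth fps_sum_nth)
  next
    case (Suc m)
    have C: "(\<Sum>i = 0..m. f i) = (\<Sum>r<Suc m. f r)" for f :: "nat \<Rightarrow> real"
      by (simp add: atLeast0AtMost lessThan_Suc_atMost del: sum.lessThan_Suc)
    show ?thesis unfolding rhs_def RR_def Suc
      by (simp add: fps_mult_left_const_nth fps_X_mult_nth fps_sum_nth A C del: sum.lessThan_Suc cong: if_cong)
  qed
qed


lemma Fser_nth: "Fser L J Q $ k $ n = SS L J Q n k"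
  by (simp add: Fser_def SS_def)

lemma Fser_fix: "Fser L J Q = rhs L J Q (Fser L J Q)"
proof (intro fps_ext)
  fix k n
  show "Fser L J Q $ k $ n = rhs L J Q (Fser L J Q) $ k $ n"
  proof (cases "n = 0")
    case True
    then show ?thesis by (simp add: rhs_nth RR_def Fser_nth SS_def paths_0)
  next
    case False
    then show ?thesis by (simp add: rhs_nth RR_def Fser_nth SS_Suc cong: if_cong)
  qed
qed

lemma fix_unique:
  assumes G: "G = rhs L J Q G" and H: "H = rhs L J Q H"
  shows "G = H"
proof -
  have "\<forall>k. G $ k $ n = H $ k $ n" for n
  proof (induction n rule: less_induct)
    case (less n)
    show ?case
    proof
      fix k
      have "G $ k $ n = RR L J Q G k n" by (subst G) (simp add: rhs_nth)
      also have "\<dots> = RR L J Q H k n"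
        unfolding RR_def using less by (intro arg_cong2[where f="(+)"] refl if_cong sum.cong) auto
      also have "\<dots> = H $ k $ n" by (subst H) (simp add: rhs_nth)
      finally show "G $ k $ n = H $ k $ n" .
    qed
  qed
  then show ?thesis by (intro fps_ext) auto
qed

theorem lemma1:
  fixes L J :: nat and Q :: "nat \<Rightarrow> nat \<Rightarrow> real poly"
  assumes "\<And>l j i. l \<le> L \<Longrightarrow> j \<le> J \<Longrightarrow> coeff (Q l j) i \<ge> 0"
  shows "Fser L J Q = rhs L J Q (Fser L J Q)
         \<and> (\<forall>G :: real fps fps. G = rhs L J Q G \<longrightarrow> G = Fser L J Q)"
  using Fser_fix fix_unique Fser_fix by blast

end
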